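(* Let $G$ be a graph whose edges are coloured with colours $1$ and $2$, and let $A_1,A_2,B$ be pairwise disjoint subsets of $V(G)$. For $i=1,2$, suppose every vertex of $A_i$ is adjacent to every vertex of $B$ and all these edges between $A_i$ and $B$ have colour $i$; let $P_{A_i}$ be a non-empty path of colour $i$ in $G[A_i]$, and let $P_B^i$ be a (possibly empty) path of colour $i$ in $G[B]$. Suppose that (a) the vertex sets of $P_B^1$ and $P_B^2$ partition $B$, and (b) $|A_1\setminus V(P_{A_1})|+|A_2\setminus V(P_{A_2})|+2\le |B|$. Then $A_1\cup A_2\cup B$ can be partitioned into two monochromatic cycles, one of colour $1$ and one of colour $2$.
   Context: A path or cycle is of colour $i$ (monochromatic) if all its edges have colour $i$; a single vertex is a path of any colour, and a single vertex, a single edge, and the empty set are also considered to be cycles. *)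

theory Defs
  imports Main
begin

definition simple_graph :: "'a set \<Rightarrow> 'a set set \<Rightarrow> bool" where
  "simple_graph V E \<longleftrightarrow> finite V \<and> (\<forall>e\<in>E. e \<subseteq> V \<and> card e = 2)"

definition two_edge_colouring :: "'a set set \<Rightarrow> ('a set \<Rightarrow> nat) \<Rightarrow> bool" where
  "two_edge_colouring E c \<longleftrightarrow> (\<forall>e\<in>E. c e \<in> {1, 2})"

text \<open>A path of colour i: a list of distinct vertices, consecutive ones joined by an
  edge of colour i. The empty list is the empty path; a single vertex is a path of any colour.\<close>

definition mono_path :: "'a set set \<Rightarrow> ('a set \<Rightarrow> nat) \<Rightarrow> nat \<Rightarrow> 'a list \<Rightarrow> bool" where
  "mono_path E c i xs \<longleftrightarrow> distinct xs \<and>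
     (\<forall>j. Suc j < length xs \<longrightarrow> {xs ! j, xs ! Suc j} \<in> E \<and> c {xs ! j, xs ! Suc j} = i)"

text \<open>The empty set, a single vertex and
  a single edge (of colour i) are cycles.\<close>

definition mono_cycle :: "'a set set \<Rightarrow> ('a set \<Rightarrow> nat) \<Rightarrow> nat \<Rightarrow> 'a list \<Rightarrow> bool" where
  "mono_cycle E c i xs \<longleftrightarrow> mono_path E c i xs \<and>
     (3 \<le> length xs \<longrightarrow> {last xs, hd xs} \<in> E \<and> c {last xs, hd xs} = i)"

end

theory Submission
  imports Defs
begin

lemma mp_Nil[simp]: "mono_path E c i []"
  by (simp add: mono_path_def)

lemma mp_Cons: "mono_path E c i (x # ys) \<longleftrightarrow> x \<notin> set ys \<and> mono_path E c i ys \<and>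
   (ys \<noteq> [] \<longrightarrow> {x, hd ys} \<in> E \<and> c {x, hd ys} = i)"
proof -
  have all: "(\<forall>j. Q j) \<longleftrightarrow> Q 0 \<and> (\<forall>k. Q (Suc k))" for Q :: "nat \<Rightarrow> bool"
    by (metis not0_implies_Suc)
  show ?thesis
    unfolding mono_path_def
    apply (subst all)
    apply (cases ys)
     apply (auto simp: hd_conv_nth)
    done
qed

lemma mp_single[simp]: "mono_path E c i [x]"
  by (simp add: mp_Cons)

lemma mp_append: "mono_path E c i (xs @ ys) \<longleftrightarrow> mono_path E c i xs \<and> mono_path E c i ys \<and>
   set xs \<inter> set ys = {} \<and>
   (xs \<noteq> [] \<and> ys \<noteq> [] \<longrightarrow> {last xs, hd ys} \<in> E \<and> c {last xs, hd ys} = i)"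
proof (induction xs)
  case Nil
  then show ?case by simp
next
  case (Cons x xs)
  show ?case
  proof (cases "xs = []")
    case True
    then show ?thesis by (auto simp: mp_Cons)
  next
    case False
    have "mono_path E c i ((x # xs) @ ys) \<longleftrightarrow> x \<notin> set (xs @ ys) \<and> mono_path E c i (xs @ ys) \<and>
      ({x, hd xs} \<in> E \<and> c {x, hd xs} = i)"
      using False by (simp only: append_Cons mp_Cons) simp
    also have "\<dots> \<longleftrightarrow> mono_path E c i (x # xs) \<and> mono_path E c i ys \<and>
      set (x # xs) \<inter> set ys = {} \<and>
      (x # xs \<noteq> [] \<and> ys \<noteq> [] \<longrightarrow> {last (x # xs), hd ys} \<in> E \<and> c {last (x # xs), hd ys} = i)"
      using False unfolding Cons.IH mp_Cons[of E c i x xs] by auto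
    finally show ?thesis .
  qed
qed

lemma mp_distinct: "mono_path E c i xs \<Longrightarrow> distinct xs"
  by (simp add: mono_path_def)

fun alt :: "'a list \<Rightarrow> 'a list \<Rightarrow> 'a list" where
  "alt (s # S) (r # R) = s # r # alt S R"
| "alt _ _ = []"

lemma alt_path:
  assumes join: "\<forall>a\<in>A. \<forall>b\<in>B. {a, b} \<in> E \<and> c {a, b} = i" and AB: "A \<inter> B = {}"
    and len: "length S = length R"
    and dS: "distinct S" and dR: "distinct R" and SB: "set S \<subseteq> B" and RA: "set R \<subseteq> A"
    and T: "mono_path E c i T" "T \<noteq> []" "set T \<subseteq> B" and ST: "set S \<inter> set T = {}"
  shows "mono_path E c i (alt S R @ T) \<and> hd (alt S R @ T) \<in> B \<and>
         set (alt S R @ T) = set S \<union> set R \<union> set T"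
  using len dS dR SB RA ST
proof (induction S R rule: list_induct2)
  case Nil
  then show ?case using T by (cases T) auto
next
  case (Cons s S r R)
  then have IH: "mono_path E c i (alt S R @ T)" "hd (alt S R @ T) \<in> B"
     "set (alt S R @ T) = set S \<union> set R \<union> set T" by auto
  have sr: "{s, r} \<in> E \<and> c {s, r} = i" using join Cons.prems
    by (metis insert_commute list.set_intros(1) subset_iff)
  have rh: "{r, hd (alt S R @ T)} \<in> E \<and> c {r, hd (alt S R @ T)} = i"
    using join Cons.prems IH(2) by auto
  have ne: "alt S R @ T \<noteq> []" using T by simp
  show ?case
    using IH sr rh ne Cons.prems AB T
    apply (simp add: mp_Cons)
    by blast
qed

lemma cyc:
  assumes join: "\<forall>a\<in>A. \<forall>b\<in>B. {a, b} \<in> E \<and> c {a, b} = i" and AB: "A \<inter> B = {}"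
    and P: "mono_path E c i P" "P \<noteq> []" "set P \<subseteq> A"
    and dR: "distinct R" and RA: "set R \<subseteq> A" and RP: "set R \<inter> set P = {}"
    and len: "length S = length R"
    and dS: "distinct S" and SB: "set S \<subseteq> B"
    and T: "mono_path E c i T" "T \<noteq> []" "set T \<subseteq> B" and ST: "set S \<inter> set T = {}"
  shows "mono_cycle E c i (P @ alt S R @ T) \<and>
         set (P @ alt S R @ T) = set P \<union> set R \<union> set S \<union> set T"
proof -
  note X = alt_path[OF join AB len dS dR SB RA T ST]
  have lP: "last P \<in> A" using P by auto
  have hP: "hd P \<in> A" using P by auto
  have lT: "last T \<in> B" using T by auto
  have ne: "alt S R @ T \<noteq> []" using T by simp
  have e1: "{last P, hd (alt S R @ T)} \<in> E \<and> c {last P, hd (alt S R @ T)} = i"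
    using join lP X by auto
  have dj: "set P \<inter> set (alt S R @ T) = {}" using X RP AB P SB T by auto
  have mp: "mono_path E c i (P @ alt S R @ T)"
    using X e1 dj P ne by (simp add: mp_append)
  have la: "last (P @ alt S R @ T) = last T" using T by simp
  have hd: "hd (P @ alt S R @ T) = hd P" using P by simp
  have e2: "{last T, hd P} \<in> E \<and> c {last T, hd P} = i"
    using join lT hP by (metis insert_commute)
  show ?thesis unfolding mono_cycle_def using mp la hd e2 X by auto
qed

lemma split_take_drop:
  assumes "mono_path E c i P"
  shows "mono_path E c i (take k P)" "mono_path E c i (drop k P)"
    "set (take k P) \<inter> set (drop k P) = {}" "set (take k P) \<union> set (drop k P) = set P"
proof -
  have "mono_path E c i (take k P @ drop k P)" using assms by simp
  then show "mono_path E c i (take k P)" "mono_path E c i (drop k P)"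
    "set (take k P) \<inter> set (drop k P) = {}"
    by (simp_all only: mp_append)
  show "set (take k P) \<union> set (drop k P) = set P"
    by (metis append_take_drop_id set_append)
qed

lemma splitB:
  assumes P1: "mono_path E c i P1" and P2: "mono_path E c j P2"
    and dj: "set P1 \<inter> set P2 = {}"
    and len: "r1 + r2 + 2 \<le> length P1 + length P2" and len2: "r2 + 1 \<le> length P2"
  shows "\<exists>S1 T1 S2 T2. distinct S1 \<and> distinct S2 \<and> length S1 = r1 \<and> length S2 = r2 \<and>
    mono_path E c i T1 \<and> T1 \<noteq> [] \<and> mono_path E c j T2 \<and> T2 \<noteq> [] \<and>
    set S1 \<inter> set T1 = {} \<and> set S1 \<inter> set S2 = {} \<and> set S1 \<inter> set T2 = {} \<and>
    set T1 \<inter> set S2 = {} \<and> set T1 \<inter> set T2 = {} \<and> set S2 \<inter> set T2 = {} \<and>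
    set S1 \<union> set T1 \<union> set S2 \<union> set T2 = set P1 \<union> set P2"
proof (cases "r1 + 1 \<le> length P1")
  case True
  note a = split_take_drop[OF P1, of r1] and b = split_take_drop[OF P2, of r2]
  have d: "distinct (take r1 P1)" "distinct (take r2 P2)"
    using mp_distinct[OF P1] mp_distinct[OF P2] by auto
  have l: "length (take r1 P1) = r1" "length (take r2 P2) = r2"
    "drop r1 P1 \<noteq> []" "drop r2 P2 \<noteq> []" using True len2 by auto
  have s: "set (take r1 P1) \<subseteq> set P1" "set (drop r1 P1) \<subseteq> set P1"
     "set (take r2 P2) \<subseteq> set P2" "set (drop r2 P2) \<subseteq> set P2"
    using a(4) b(4) by blast+
  show ?thesis
    apply (rule exI[of _ "take r1 P1"], rule exI[of _ "drop r1 P1"],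
           rule exI[of _ "take r2 P2"], rule exI[of _ "drop r2 P2"])
    apply (intro conjI)
    using a b d l s dj
    by blast+
next
  case False
  define d where "d = r1 - length P1"
  have dl: "d < length P2" using False len d_def by simp
  define Q1 where "Q1 = take d P2"
  define x where "x = P2 ! d"
  define Q2 where "Q2 = drop (Suc d) P2"
  have P2eq: "P2 = Q1 @ x # Q2"
    unfolding Q1_def x_def Q2_def using dl by (simp add: Cons_nth_drop_Suc)
  have lQ1: "length Q1 = d" using dl Q1_def by simp
  have lQ2: "r2 + 1 \<le> length Q2" using False len dl unfolding Q2_def d_def by simp
  have mQ: "mono_path E c j Q1" "mono_path E c j Q2" "x \<notin> set Q2" "x \<notin> set Q1"
    "set Q1 \<inter> set Q2 = {}"
    using P2 unfolding P2eq by (auto simp: mp_append mp_Cons)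
  note b = split_take_drop[OF mQ(2), of r2]
  have d: "distinct (P1 @ Q1)" "distinct (take r2 Q2)"
    using mp_distinct[OF P1] mp_distinct[OF mQ(1)] mp_distinct[OF mQ(2)] dj P2eq by auto
  have l: "length (P1 @ Q1) = r1" "length (take r2 Q2) = r2" "drop r2 Q2 \<noteq> []"
    using lQ1 lQ2 False d_def by auto
  have s: "set (take r2 Q2) \<subseteq> set Q2" "set (drop r2 Q2) \<subseteq> set Q2"
    using b(4) by blast+
  have dj2: "set P1 \<inter> set Q1 = {}" "set P1 \<inter> set Q2 = {}" "x \<notin> set P1"
    and un: "set P2 = set Q1 \<union> {x} \<union> set Q2"
    using dj P2eq by auto
  show ?thesis
    apply (rule exI[of _ "P1 @ Q1"], rule exI[of _ "[x]"],
           rule exI[of _ "take r2 Q2"], rule exI[of _ "drop r2 Q2"])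
    apply (intro conjI)
    using b d l s dj2 un mQ
    by (simp_all, blast+)
qed

theorem lemma3p4:
  fixes V :: "'a set" and E :: "'a set set" and c :: "'a set \<Rightarrow> nat"
    and A1 A2 B :: "'a set" and PA1 PA2 PB1 PB2 :: "'a list"
  assumes G: "simple_graph V E" and col: "two_edge_colouring E c"
    and sub: "A1 \<subseteq> V" "A2 \<subseteq> V" "B \<subseteq> V"
    and disj: "A1 \<inter> A2 = {}" "A1 \<inter> B = {}" "A2 \<inter> B = {}"
    and join1: "\<forall>a\<in>A1. \<forall>b\<in>B. {a, b} \<in> E \<and> c {a, b} = 1"
    and join2: "\<forall>a\<in>A2. \<forall>b\<in>B. {a, b} \<in> E \<and> c {a, b} = 2"
    and PA1: "mono_path E c 1 PA1" "set PA1 \<subseteq> A1" "PA1 \<noteq> []"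
    and PA2: "mono_path E c 2 PA2" "set PA2 \<subseteq> A2" "PA2 \<noteq> []"
    and PB1: "mono_path E c 1 PB1" "set PB1 \<subseteq> B"
    and PB2: "mono_path E c 2 PB2" "set PB2 \<subseteq> B"
    and a: "set PB1 \<inter> set PB2 = {}" "set PB1 \<union> set PB2 = B"
    and b: "card (A1 - set PA1) + card (A2 - set PA2) + 2 \<le> card B"
  shows "\<exists>C1 C2. mono_cycle E c 1 C1 \<and> mono_cycle E c 2 C2 \<and>
           set C1 \<inter> set C2 = {} \<and> set C1 \<union> set C2 = A1 \<union> A2 \<union> B"
proof -
  have fV: "finite V" using G by (simp add: simple_graph_def)
  have f1: "finite (A1 - set PA1)" "finite (A2 - set PA2)"
    using fV sub finite_subset by blast+
  obtain R1 where R1: "set R1 = A1 - set PA1" "distinct R1"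
    using finite_distinct_list[OF f1(1)] by blast
  obtain R2 where R2: "set R2 = A2 - set PA2" "distinct R2"
    using finite_distinct_list[OF f1(2)] by blast
  have cB: "card B = length PB1 + length PB2"
    using a mp_distinct[OF PB1(1)] mp_distinct[OF PB2(1)]
    by (metis card_Un_disjoint distinct_card finite_set)
  have lens: "length R1 + length R2 + 2 \<le> length PB1 + length PB2"
    using b cB R1 R2 by (simp add: distinct_card[symmetric])
  obtain S1 T1 S2 T2 where S: "distinct S1 \<and> distinct S2 \<and> length S1 = length R1 \<and> length S2 = length R2 \<and>
    mono_path E c 1 T1 \<and> T1 \<noteq> [] \<and> mono_path E c 2 T2 \<and> T2 \<noteq> [] \<and>
    set S1 \<inter> set T1 = {} \<and> set S1 \<inter> set S2 = {} \<and> set S1 \<inter> set T2 = {} \<and>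
    set T1 \<inter> set S2 = {} \<and> set T1 \<inter> set T2 = {} \<and> set S2 \<inter> set T2 = {} \<and>
    set S1 \<union> set T1 \<union> set S2 \<union> set T2 = set PB1 \<union> set PB2"
  proof (cases "length R2 + 1 \<le> length PB2")
    case True
    show ?thesis using splitB[OF PB1(1) PB2(1) a(1) lens True]
      apply - apply (elim exE) apply (rule that) apply assumption done
  next
    case False
    have l': "length R2 + length R1 + 2 \<le> length PB2 + length PB1" using lens by simp
    have l2: "length R1 + 1 \<le> length PB1" using False lens by simp
    have a': "set PB2 \<inter> set PB1 = {}" using a by blast
    obtain X1 Y1 X2 Y2 where "distinct X1 \<and> distinct X2 \<and> length X1 = length R2 \<and> length X2 = length R1 \<and>
      mono_path E c 2 Y1 \<and> Y1 \<noteq> [] \<and> mono_path E c 1 Y2 \<and> Y2 \<noteq> [] \<and>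
      set X1 \<inter> set Y1 = {} \<and> set X1 \<inter> set X2 = {} \<and> set X1 \<inter> set Y2 = {} \<and>
      set Y1 \<inter> set X2 = {} \<and> set Y1 \<inter> set Y2 = {} \<and> set X2 \<inter> set Y2 = {} \<and>
      set X1 \<union> set Y1 \<union> set X2 \<union> set Y2 = set PB2 \<union> set PB1"
      using splitB[OF PB2(1) PB1(1) a' l' l2] apply - apply (elim exE) apply assumption done
    then show ?thesis
      apply -
      apply (rule that[of X2 X1 Y2 Y1])
      apply (elim conjE, intro conjI)
      by (assumption | blast)+
  qed
  have SB: "set S1 \<subseteq> B" "set S2 \<subseteq> B" "set T1 \<subseteq> B" "set T2 \<subseteq> B" using S a by blast+
  have c1: "mono_cycle E c 1 (PA1 @ alt S1 R1 @ T1) \<and>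
         set (PA1 @ alt S1 R1 @ T1) = set PA1 \<union> set R1 \<union> set S1 \<union> set T1"
    apply (rule cyc[OF join1 disj(2) PA1(1) PA1(3) PA1(2) R1(2)])
    using R1 S SB by auto
  have c2: "mono_cycle E c 2 (PA2 @ alt S2 R2 @ T2) \<and>
         set (PA2 @ alt S2 R2 @ T2) = set PA2 \<union> set R2 \<union> set S2 \<union> set T2"
    apply (rule cyc[OF join2 disj(3) PA2(1) PA2(3) PA2(2) R2(2)])
    using R2 S SB by auto
  have s1: "set (PA1 @ alt S1 R1 @ T1) = A1 \<union> (set S1 \<union> set T1)"
    using c1 R1(1) PA1(2) by blast
  have s2: "set (PA2 @ alt S2 R2 @ T2) = A2 \<union> (set S2 \<union> set T2)"
    using c2 R2(1) PA2(2) by blast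
  have un: "set S1 \<union> set T1 \<union> set S2 \<union> set T2 = B" using S a(2) by simp
  have dd: "(set S1 \<union> set T1) \<inter> (set S2 \<union> set T2) = {}" using S by blast
  have i1: "(A1 \<union> (set S1 \<union> set T1)) \<inter> (A2 \<union> (set S2 \<union> set T2)) = {}"
    using dd disj SB by blast
  have i2: "(A1 \<union> (set S1 \<union> set T1)) \<union> (A2 \<union> (set S2 \<union> set T2)) = A1 \<union> A2 \<union> B"
    using un by blast
  show ?thesis
    apply (rule exI[of _ "PA1 @ alt S1 R1 @ T1"], rule exI[of _ "PA2 @ alt S2 R2 @ T2"])
    unfolding s1 s2 using c1 c2 i1 i2 by blast
qed

end
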